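(* Let $k\ge2$ and $n\ge k$ be integers, let $\beta=\sum_{i=1}^n i^{k-1}$ and $c_i=i^{k-1}/\beta$ for $i=1,\dots,n$. In the position-randomized auction setting described in the context, suppose all $k-1$ disadvantaged bidders use the initial bid sequence $c_1,\dots,c_n$ and the uniform distribution on permutations. Then for every position-randomized strategy of the adversary ${\mathcal A}$, each disadvantaged bidder wins at least $\frac{1}{k-1}\left(n-\frac{\beta-1}{n^{k-1}}\right)$ objects in expectation. Moreover this is optimal: for every initial bid sequence and every permutation distribution used in common by the disadvantaged bidders, ${\mathcal A}$ has a position-randomized strategy under which each disadvantaged bidder wins at most $\frac{1}{k-1}\left(n-\frac{\beta-1}{n^{k-1}}\right)$ objects in expectation.
   Context: Auction model: there are $k$ bidders, one adversary ${\mathcal A}$ and $k-1$ disadvantaged bidders, and $n$ objects auctioned simultaneously. Each object is won by the highest bidder on it, paying his bid; if $m$ bidders tie for the highest bid, each wins with probability $1/m$. All bidders are restricted to position-randomized bidding algorithms: a bidder chooses an initial sequence $x_1,\dots,x_n$ of positive reals with $\sum x_j\le 1$ (the budget) and a probability distribution on permutations $\sigma$ of $\{1,\dots,n\}$; he draws $\sigma$ from that distribution and bids $x_j$ on object $\sigma(j)$. All disadvantaged bidders use the same initial sequence and the same permutation distribution, each drawing his permutation independently; ${\mathcal A}$ knows their algorithm, and his permutation is drawn independently of theirs. Expected numbers of won objects are over all this randomness. *)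

theory Defs
  imports "HOL-Combinatorics.Permutations" Complex_Main
begin

text \<open>Objects are indexed by 0..n-1; position j (0-based) of an initial
  sequence corresponds to the paper's position j+1.\<close>

definition perms :: "nat \<Rightarrow> (nat \<Rightarrow> nat) set" where
  "perms n = {\<sigma>. \<sigma> permutes {..<n}}"

definition bidseq :: "nat \<Rightarrow> (nat \<Rightarrow> real) \<Rightarrow> bool" where
  "bidseq n x \<longleftrightarrow> (\<forall>j<n. 0 < x j) \<and> (\<Sum>j<n. x j) \<le> 1"

definition permdist :: "nat \<Rightarrow> ((nat \<Rightarrow> nat) \<Rightarrow> real) \<Rightarrow> bool" where
  "permdist n p \<longleftrightarrow> (\<forall>\<sigma>\<in>perms n. 0 \<le> p \<sigma>) \<and> (\<Sum>\<sigma>\<in>perms n. p \<sigma>) = 1"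

definition unif_perm :: "nat \<Rightarrow> (nat \<Rightarrow> nat) \<Rightarrow> real" where
  "unif_perm n \<sigma> = 1 / real (fact n)"

text \<open>Bid placed on object ob when x_j is bid on object \<sigma>(j).\<close>
definition bid :: "(nat \<Rightarrow> real) \<Rightarrow> (nat \<Rightarrow> nat) \<Rightarrow> nat \<Rightarrow> real" where
  "bid x \<sigma> ob = x (inv \<sigma> ob)"

definition share :: "(nat \<Rightarrow> real) \<Rightarrow> nat \<Rightarrow> nat \<Rightarrow> real" where
  "share bs m d = (if bs d = Max (bs ` {..<m})
      then 1 / real (card {j\<in>{..<m}. bs j = bs d}) else 0)"

text \<open>Expected number of objects won by disadvantaged bidder d (1 \<le> d \<le> k-1).
  Bidder 0 is the adversary using (y,q); bidders 1..k-1 use (x,p), independently.\<close>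
definition expected_win ::
  "nat \<Rightarrow> nat \<Rightarrow> (nat \<Rightarrow> real) \<Rightarrow> ((nat \<Rightarrow> nat) \<Rightarrow> real)
     \<Rightarrow> (nat \<Rightarrow> real) \<Rightarrow> ((nat \<Rightarrow> nat) \<Rightarrow> real) \<Rightarrow> nat \<Rightarrow> real" where
  "expected_win n k x p y q d =
     (\<Sum>\<tau>\<in>perms n. \<Sum>ss\<in>PiE {1..k-1} (\<lambda>_. perms n).
        q \<tau> * (\<Prod>i\<in>{1..k-1}. p (ss i)) *
        (\<Sum>ob<n. share (\<lambda>i. if i = 0 then bid y \<tau> ob else bid x (ss i) ob) k d))"

end

theory Submission
  imports Defs "HOL-Analysis.Convex"
begin


lemma perms_finite: "finite (perms n)"
  unfolding perms_def by (rule finite_permutations) simp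

lemma perms_card: "card (perms n) = fact n"
  unfolding perms_def by (rule card_permutations) simp_all

lemma perms_inv_bij: "bij_betw inv (perms n) (perms n)"
  by (rule bij_betw_byWitness[where f'=inv])
     (auto simp: perms_def permutes_inv_inv permutes_inv)

lemma sum_inv_perm:
  assumes "\<sigma> permutes {..<n}"
  shows "(\<Sum>ob<n. h (inv \<sigma> ob)) = (\<Sum>i<n. h i)"
  using sum.reindex_bij_betw[OF permutes_imp_bij[OF permutes_inv[OF assms]], of h] .

lemma sum_perm:
  assumes "\<sigma> permutes {..<n}"
  shows "(\<Sum>ob<n. h (\<sigma> ob)) = (\<Sum>i<n. h i)"
  using sum.reindex_bij_betw[OF permutes_imp_bij[OF assms], of h] .

lemma col_const:
  fixes g :: "nat \<Rightarrow> real"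
  assumes "a < n" "b < n"
  shows "(\<Sum>\<sigma>\<in>perms n. g (\<sigma> a)) = (\<Sum>\<sigma>\<in>perms n. g (\<sigma> b))"
proof -
  let ?t = "transpose a b"
  have tp: "?t permutes {..<n}" using assms by (intro permutes_swap_id) auto
  have bij: "bij_betw (\<lambda>\<sigma>. \<sigma> \<circ> ?t) (perms n) (perms n)"
    by (rule bij_betw_byWitness[where f'="\<lambda>\<sigma>. \<sigma> \<circ> ?t"])
       (auto simp: perms_def o_assoc[symmetric] permutes_compose[OF tp])
  have "(\<Sum>\<sigma>\<in>perms n. g (\<sigma> a)) = (\<Sum>\<sigma>\<in>perms n. g ((\<sigma> \<circ> ?t) a))"
    using sum.reindex_bij_betw[OF bij, of "\<lambda>\<sigma>. g (\<sigma> a)"] by simp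
  also have "\<dots> = (\<Sum>\<sigma>\<in>perms n. g (\<sigma> b))" by simp
  finally show ?thesis .
qed

lemma marg:
  fixes g :: "nat \<Rightarrow> real"
  assumes "ob < n"
  shows "real n * (\<Sum>\<sigma>\<in>perms n. g (inv \<sigma> ob)) = fact n * (\<Sum>j<n. g j)"
proof -
  have "(\<Sum>\<sigma>\<in>perms n. g (inv \<sigma> ob)) = (\<Sum>\<sigma>\<in>perms n. g (\<sigma> ob))"
    using sum.reindex_bij_betw[OF perms_inv_bij, of "\<lambda>\<sigma>. g (\<sigma> ob)"] by simp
  also have "real n * \<dots> = (\<Sum>b<n. (\<Sum>\<sigma>\<in>perms n. g (\<sigma> b)))"
  proof -
    have "(\<Sum>b<n. (\<Sum>\<sigma>\<in>perms n. g (\<sigma> b))) = (\<Sum>b<n. (\<Sum>\<sigma>\<in>perms n. g (\<sigma> ob)))"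
      by (rule sum.cong) (use col_const[OF assms] in auto)
    then show ?thesis by simp
  qed
  also have "\<dots> = (\<Sum>\<sigma>\<in>perms n. \<Sum>b<n. g (\<sigma> b))" by (rule sum.swap)
  also have "\<dots> = (\<Sum>\<sigma>\<in>perms n. \<Sum>j<n. g j)"
    by (rule sum.cong) (auto simp: perms_def sum_perm)
  also have "\<dots> = fact n * (\<Sum>j<n. g j)" by (simp add: perms_card)
  finally show ?thesis by simp
qed

lemma prod_of_bool:
  "finite I \<Longrightarrow> (\<Prod>i\<in>I. (of_bool (P i) :: real)) = of_bool (\<forall>i\<in>I. P i)"
  by (induction I rule: finite_induct) auto

lemma share_nonneg: "0 \<le> share bs m d"
  unfolding share_def by simp

lemma share_sum:
  assumes "m \<ge> 1"
  shows "(\<Sum>d<m. share bs m d) = 1"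
proof -
  define M where "M = Max (bs ` {..<m})"
  define W where "W = {j\<in>{..<m}. bs j = M}"
  have "M \<in> bs ` {..<m}" unfolding M_def using assms by (intro Max_in) (auto simp: lessThan_empty_iff)
  then have Wne: "W \<noteq> {}" unfolding W_def by auto
  have fW: "finite W" unfolding W_def by auto
  have "\<And>d. d < m \<Longrightarrow> share bs m d = (if d \<in> W then 1 / real (card W) else 0)"
    unfolding share_def W_def M_def by auto
  then have "(\<Sum>d<m. share bs m d) = (\<Sum>d<m. if d \<in> W then 1 / real (card W) else 0)"
    by simp
  also have "\<dots> = (\<Sum>d\<in>{..<m} \<inter> W. 1 / real (card W))"
    by (rule sum.inter_restrict[symmetric]) simp
  also have "{..<m} \<inter> W = W" unfolding W_def by auto
  finally show ?thesis using Wne fW by simp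
qed

lemma share_perm:
  assumes "s permutes {..<m}" "d < m"
  shows "share (\<lambda>i. bs (s i)) m d = share bs m (s d)"
proof -
  have sin: "s j < m \<longleftrightarrow> j < m" for j
    using permutes_in_image[OF assms(1), of j] by simp
  have "(\<lambda>i. bs (s i)) ` {..<m} = bs ` (s ` {..<m})" by (simp add: image_image)
  also have "s ` {..<m} = {..<m}" by (rule permutes_image[OF assms(1)])
  finally have img: "(\<lambda>i. bs (s i)) ` {..<m} = bs ` {..<m}" .
  have seteq: "s ` {j\<in>{..<m}. bs (s j) = v} = {j\<in>{..<m}. bs j = v}" for v
  proof
    show "s ` {j\<in>{..<m}. bs (s j) = v} \<subseteq> {j\<in>{..<m}. bs j = v}"
      using sin by auto
    show "{j\<in>{..<m}. bs j = v} \<subseteq> s ` {j\<in>{..<m}. bs (s j) = v}"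
    proof
      fix j assume j: "j \<in> {j\<in>{..<m}. bs j = v}"
      have e: "s (inv s j) = j" by (rule permutes_inverses(1)[OF assms(1)])
      then have "inv s j < m" using j sin[of "inv s j"] by simp
      then have "inv s j \<in> {j\<in>{..<m}. bs (s j) = v}" using j e by simp
      then show "j \<in> s ` {j\<in>{..<m}. bs (s j) = v}"
        using e by (metis image_eqI)
    qed
  qed
  have inj: "inj_on s A" for A by (rule permutes_inj_on[OF assms(1)])
  have "card {j\<in>{..<m}. bs (s j) = v} = card {j\<in>{..<m}. bs j = v}" for v
    using card_image[OF inj, of "{j\<in>{..<m}. bs (s j) = v}"] seteq[of v] by simp
  then show ?thesis unfolding share_def img by simp
qed

lemma share_le_card:
  "share bs m 0 \<le> 1 / real (card {j\<in>{..<m}. bs j = bs 0})"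
  unfolding share_def by simp

lemma share_upper:
  fixes bs :: "nat \<Rightarrow> real"
  assumes "m \<ge> 1"
  shows "share bs m 0 \<le> (of_bool (\<forall>i\<in>{1..m-1}. bs i \<le> bs 0) + of_bool (\<forall>i\<in>{1..m-1}. bs i < bs 0)) / 2"
proof (cases "\<exists>i\<in>{1..m-1}. bs i > bs 0")
  case True
  then obtain i where i: "i \<in> {1..m-1}" "bs i > bs 0" by auto
  have "i < m" using i assms by auto
  then have "bs i \<le> Max (bs ` {..<m})" by (intro Max_ge) auto
  then have "bs 0 \<noteq> Max (bs ` {..<m})" using i by auto
  then show ?thesis unfolding share_def by simp
next
  case False
  then have le: "\<forall>i\<in>{1..m-1}. bs i \<le> bs 0" by (auto simp: not_less)
  define C where "C = card {j\<in>{..<m}. bs j = bs 0}"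
  have z: "0 \<in> {j\<in>{..<m}. bs j = bs 0}" using assms by simp
  have fz: "finite {j\<in>{..<m}. bs j = bs 0}" by simp
  have "C > 0" unfolding C_def using z fz card_gt_0_iff by blast
  then have c1: "C \<ge> 1" by simp
  have sC: "share bs m 0 \<le> 1 / real C" unfolding C_def by (rule share_le_card)
  show ?thesis
  proof (cases "\<forall>i\<in>{1..m-1}. bs i < bs 0")
    case True
    have "1 / real C \<le> 1" using c1 by simp
    then show ?thesis using True le sC by simp
  next
    case False
    then obtain i where i0: "i \<in> {1..m-1}" "\<not> bs i < bs 0" by blast
    have "bs i \<le> bs 0" using le i0(1) by blast
    then have i: "i \<in> {1..m-1}" "bs i = bs 0" using i0 by auto
    have "{0, i} \<subseteq> {j\<in>{..<m}. bs j = bs 0}" using i assms by auto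
    then have "card {0, i} \<le> C" unfolding C_def by (intro card_mono) auto
    moreover have "card {0, i} = 2" using i by simp
    ultimately have c2: "2 \<le> C" by simp
    have "1 / real C \<le> 1/2" using c2 by (simp add: field_simps)
    then show ?thesis using False le sC by simp
  qed
qed

lemma share_lower:
  fixes bs :: "nat \<Rightarrow> real"
  assumes "m \<ge> 1"
  shows "of_bool (\<forall>i\<in>{1..m-1}. bs i < bs 0) \<le> share bs m 0"
proof (cases "\<forall>i\<in>{1..m-1}. bs i < bs 0")
  case True
  have split: "j = 0 \<or> j \<in> {1..m-1}" if "j < m" for j using that by auto
  have M: "Max (bs ` {..<m}) = bs 0"
  proof (rule Max_eqI)
    show "y \<le> bs 0" if yin: "y \<in> bs ` {..<m}" for y
    proof -
      obtain j where j: "j \<in> {..<m}" "y = bs j" using yin by (rule imageE) simp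
      show ?thesis
      proof (cases "j = 0")
        case False
        then have "j \<in> {1..m-1}" using j by auto
        then have "bs j < bs 0" using True by blast
        then show ?thesis using j by simp
      qed (use j in simp)
    qed
    show "bs 0 \<in> bs ` {..<m}" using assms by auto
  qed simp
  have "{j\<in>{..<m}. bs j = bs 0} = {0}"
  proof (intro equalityI subsetI)
    fix j assume "j \<in> {j\<in>{..<m}. bs j = bs 0}"
    then have j: "j < m" "bs j = bs 0" by auto
    show "j \<in> {0}"
    proof (rule ccontr)
      assume "j \<notin> {0}"
      then have "j \<in> {1..m-1}" using j by auto
      then have "bs j < bs 0" using True by blast
      then show False using j by simp
    qed
  qed (use assms in auto)
  then show ?thesis using M True unfolding share_def by simp
next
  case False
  then have "of_bool (\<forall>i\<in>{1..m-1}. bs i < bs 0) = (0::real)" by simp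
  with share_nonneg[of bs m 0] show ?thesis by linarith
qed


lemma share_sum1:
  assumes "k \<ge> 1"
  shows "(\<Sum>d\<in>{1..k-1}. share bs k d) = 1 - share bs k 0"
proof -
  have "{..<k} = insert 0 {1..k-1}" using assms by auto
  then have "(\<Sum>d<k. share bs k d) = share bs k 0 + (\<Sum>d\<in>{1..k-1}. share bs k d)"
    by simp
  then show ?thesis using share_sum[OF assms, of bs] by simp
qed

lemma sum_PiE_prod_one:
  assumes "permdist n p" "finite I"
  shows "(\<Sum>ss\<in>PiE I (\<lambda>_. perms n). \<Prod>i\<in>I. p (ss i)) = 1"
proof -
  have "(\<Sum>ss\<in>PiE I (\<lambda>_. perms n). \<Prod>i\<in>I. p (ss i)) = (\<Prod>i\<in>I. \<Sum>\<sigma>\<in>perms n. p \<sigma>)"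
    by (rule prod_sum_PiE[symmetric]) (use assms perms_finite in auto)
  also have "\<dots> = 1" using assms unfolding permdist_def by simp
  finally show ?thesis .
qed

definition Aw where
  "Aw n k x p y q = (\<Sum>\<tau>\<in>perms n. \<Sum>ss\<in>PiE {1..k-1} (\<lambda>_. perms n).
        q \<tau> * (\<Prod>i\<in>{1..k-1}. p (ss i)) *
        (\<Sum>ob<n. share (\<lambda>i. if i = 0 then bid y \<tau> ob else bid x (ss i) ob) k 0))"

lemma ew_total:
  assumes "k \<ge> 2" "permdist n p" "permdist n q"
  shows "(\<Sum>d\<in>{1..k-1}. expected_win n k x p y q d) = real n - Aw n k x p y q"
proof -
  let ?SS = "PiE {1..k-1} (\<lambda>_. perms n)"
  let ?W = "\<lambda>\<tau> ss. q \<tau> * (\<Prod>i\<in>{1..k-1}. p (ss i))"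
  let ?b = "\<lambda>\<tau> ss ob. (\<lambda>i. if i = 0 then bid y \<tau> ob else bid x (ss i) ob)"
  have "(\<Sum>d\<in>{1..k-1}. expected_win n k x p y q d)
      = (\<Sum>d\<in>{1..k-1}. \<Sum>\<tau>\<in>perms n. \<Sum>ss\<in>?SS. ?W \<tau> ss * (\<Sum>ob<n. share (?b \<tau> ss ob) k d))"
    unfolding expected_win_def by simp
  also have "\<dots> = (\<Sum>\<tau>\<in>perms n. \<Sum>ss\<in>?SS. \<Sum>d\<in>{1..k-1}. ?W \<tau> ss * (\<Sum>ob<n. share (?b \<tau> ss ob) k d))"
  proof -
    have "(\<Sum>d\<in>{1..k-1}. \<Sum>\<tau>\<in>perms n. \<Sum>ss\<in>?SS. ?W \<tau> ss * (\<Sum>ob<n. share (?b \<tau> ss ob) k d))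
       = (\<Sum>\<tau>\<in>perms n. \<Sum>d\<in>{1..k-1}. \<Sum>ss\<in>?SS. ?W \<tau> ss * (\<Sum>ob<n. share (?b \<tau> ss ob) k d))"
      by (rule sum.swap)
    also have "\<dots> = (\<Sum>\<tau>\<in>perms n. \<Sum>ss\<in>?SS. \<Sum>d\<in>{1..k-1}. ?W \<tau> ss * (\<Sum>ob<n. share (?b \<tau> ss ob) k d))"
      by (rule sum.cong[OF refl], rule sum.swap)
    finally show ?thesis .
  qed
  also have "\<dots> = (\<Sum>\<tau>\<in>perms n. \<Sum>ss\<in>?SS. ?W \<tau> ss * (\<Sum>ob<n. \<Sum>d\<in>{1..k-1}. share (?b \<tau> ss ob) k d))"
  proof -
    have sw: "\<And>f. (\<Sum>d\<in>{1..k-1}. \<Sum>ob<n. f d ob) = (\<Sum>ob<n. \<Sum>d\<in>{1..k-1}. (f d ob::real))"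
      by (rule sum.swap)
    show ?thesis by (simp only: sum_distrib_left[symmetric] sw)
  qed
  also have "\<dots> = (\<Sum>\<tau>\<in>perms n. \<Sum>ss\<in>?SS. ?W \<tau> ss * (real n - (\<Sum>ob<n. share (?b \<tau> ss ob) k 0)))"
  proof -
    have s1: "\<And>bs. (\<Sum>d\<in>{1..k-1}. share bs k d) = 1 - share bs k 0"
      using assms(1) share_sum1 by simp
    have s2: "\<And>f. (\<Sum>ob<n. (1 - f ob)) = real n - (\<Sum>ob<n. (f ob::real))"
      by (simp add: sum_subtractf)
    show ?thesis by (simp only: s1 s2)
  qed
  also have "\<dots> = real n * (\<Sum>\<tau>\<in>perms n. \<Sum>ss\<in>?SS. ?W \<tau> ss) - Aw n k x p y q"
    unfolding Aw_def by (simp add: right_diff_distrib sum_subtractf sum_distrib_left mult_ac)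
  also have "(\<Sum>\<tau>\<in>perms n. \<Sum>ss\<in>?SS. ?W \<tau> ss) = 1"
    using assms(2,3) sum_PiE_prod_one[of n p "{1..k-1}"] unfolding permdist_def
    by (simp add: sum_distrib_left[symmetric])
  finally show ?thesis by simp
qed

lemma ew_sym:
  assumes "d \<in> {1..k-1}" "d' \<in> {1..k-1}"
  shows "expected_win n k x p y q d = expected_win n k x p y q d'"
proof -
  let ?SS = "PiE {1..k-1} (\<lambda>_. perms n)"
  define s where "s = transpose d d'"
  have sI: "s permutes {1..k-1}" unfolding s_def using assms by (intro permutes_swap_id)
  have sK: "s permutes {..<k}" unfolding s_def using assms by (intro permutes_swap_id) auto
  have ss: "s \<circ> s = id" unfolding s_def by simp
  have s0: "s i = 0 \<longleftrightarrow> i = 0" for i using assms unfolding s_def by (auto simp: transpose_def)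
  have sd: "s d = d'" unfolding s_def by simp
  have mem: "ss \<circ> s \<in> ?SS" if "ss \<in> ?SS" for ss
  proof -
    have "ss (s i) \<in> perms n" if "i \<in> {1..k-1}" for i
      using \<open>ss \<in> ?SS\<close> permutes_in_image[OF sI, of i] that by auto
    moreover have "ss (s i) = undefined" if "i \<notin> {1..k-1}" for i
      using \<open>ss \<in> ?SS\<close> permutes_not_in[OF sI that] that by auto
    ultimately show ?thesis by (auto simp: PiE_iff extensional_def)
  qed
  have invo: "\<forall>ss\<in>?SS. (ss \<circ> s) \<circ> s = ss" by (simp add: comp_assoc ss)
  have img: "(\<lambda>ss. ss \<circ> s) ` ?SS \<subseteq> ?SS" using mem by blast
  have bij: "bij_betw (\<lambda>ss. ss \<circ> s) ?SS ?SS"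
    by (rule bij_betw_byWitness[OF invo invo img img])
  have inner: "(\<Sum>ss\<in>?SS. q \<tau> * (\<Prod>i\<in>{1..k-1}. p (ss i)) *
        (\<Sum>ob<n. share (\<lambda>i. if i = 0 then bid y \<tau> ob else bid x (ss i) ob) k d))
      = (\<Sum>ss\<in>?SS. q \<tau> * (\<Prod>i\<in>{1..k-1}. p (ss i)) *
        (\<Sum>ob<n. share (\<lambda>i. if i = 0 then bid y \<tau> ob else bid x (ss i) ob) k d'))" for \<tau>
  proof -
    let ?F = "\<lambda>ss. q \<tau> * (\<Prod>i\<in>{1..k-1}. p (ss i)) *
        (\<Sum>ob<n. share (\<lambda>i. if i = 0 then bid y \<tau> ob else bid x (ss i) ob) k d)"
    have "(\<Sum>ss\<in>?SS. ?F ss) = (\<Sum>ss\<in>?SS. ?F (ss \<circ> s))"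
      using sum.reindex_bij_betw[OF bij, of ?F] by simp
    also have "\<dots> = (\<Sum>ss\<in>?SS. q \<tau> * (\<Prod>i\<in>{1..k-1}. p (ss i)) *
        (\<Sum>ob<n. share (\<lambda>i. if i = 0 then bid y \<tau> ob else bid x (ss i) ob) k d'))"
    proof (rule sum.cong[OF refl])
      fix ss assume "ss \<in> ?SS"
      have pr: "(\<Prod>i\<in>{1..k-1}. p ((ss \<circ> s) i)) = (\<Prod>i\<in>{1..k-1}. p (ss i))"
        using prod.reindex_bij_betw[OF permutes_imp_bij[OF sI], of "\<lambda>i. p (ss i)"] by simp
      have sh: "share (\<lambda>i. if i = 0 then bid y \<tau> ob else bid x ((ss \<circ> s) i) ob) k d
          = share (\<lambda>i. if i = 0 then bid y \<tau> ob else bid x (ss i) ob) k d'" for ob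
      proof -
        let ?bs = "\<lambda>i. if i = 0 then bid y \<tau> ob else bid x (ss i) ob"
        have "(\<lambda>i. if i = 0 then bid y \<tau> ob else bid x ((ss \<circ> s) i) ob) = (\<lambda>i. ?bs (s i))"
          using s0 by (auto simp: fun_eq_iff)
        moreover have "d < k" using assms by auto
        ultimately show ?thesis using share_perm[OF sK, of d ?bs] sd by simp
      qed
      show "?F (ss \<circ> s) = q \<tau> * (\<Prod>i\<in>{1..k-1}. p (ss i)) *
        (\<Sum>ob<n. share (\<lambda>i. if i = 0 then bid y \<tau> ob else bid x (ss i) ob) k d')"
        using pr sh by simp
    qed
    finally show ?thesis .
  qed
  show ?thesis unfolding expected_win_def using inner by simp
qed

lemma ew_eq:
  assumes "k \<ge> 2" "permdist n p" "permdist n q" "d \<in> {1..k-1}"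
  shows "expected_win n k x p y q d = (real n - Aw n k x p y q) / real (k - 1)"
proof -
  have "(\<Sum>d'\<in>{1..k-1}. expected_win n k x p y q d') = (\<Sum>d'\<in>{1..k-1}. expected_win n k x p y q d)"
    by (rule sum.cong[OF refl]) (use ew_sym assms(4) in metis)
  also have "\<dots> = real (k - 1) * expected_win n k x p y q d" by simp
  finally show ?thesis using ew_total[OF assms(1-3), of x y] assms(1)
    by (simp add: field_simps)
qed



lemma comb_point:
  fixes c :: "nat \<Rightarrow> real" and a \<beta> :: real and n :: nat
  assumes k: "k \<ge> 2" and bpos: "\<beta> > 0" and apos: "a > 0"
    and cdef: "c = (\<lambda>j::nat. real (j + 1) ^ (k - 1) / \<beta>)"
  defines "U \<equiv> card ({..<n} \<inter> {i. c i \<le> a})"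
  defines "L \<equiv> card ({..<n} \<inter> {i. c i < a})"
  shows "L \<le> U" "real U ^ (k - 1) \<le> \<beta> * a"
    "real U ^ (k - 1) < \<beta> * a \<or> (U \<ge> 1 \<and> L = U - 1)"
proof -
  have cmono: "c i < c j" if "i < j" for i j
  proof -
    have "real (i + 1) ^ (k - 1) < real (j + 1) ^ (k - 1)"
      using that k by (intro power_strict_mono) auto
    then show ?thesis unfolding cdef using bpos by (simp add: divide_strict_right_mono)
  qed
  have cle: "c i \<le> c j \<longleftrightarrow> i \<le> j" for i j
    using cmono[of i j] cmono[of j i] by (cases i j rule: linorder_cases) auto
  have clt: "c i < c j \<longleftrightarrow> i < j" for i j
    using cmono[of i j] cmono[of j i] by (cases i j rule: linorder_cases) auto
  define S where "S = {..<n} \<inter> {i. c i \<le> a}"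
  define T where "T = {..<n} \<inter> {i. c i < a}"
  have TS: "T \<subseteq> S" unfolding S_def T_def by auto
  have fS: "finite S" unfolding S_def by simp
  show "L \<le> U" unfolding L_def U_def using card_mono[OF fS TS] unfolding S_def T_def .
  have "real U ^ (k - 1) \<le> \<beta> * a \<and> (real U ^ (k - 1) < \<beta> * a \<or> (U \<ge> 1 \<and> L = U - 1))"
  proof (cases "S = {}")
    case True
    then have "U = 0" unfolding U_def S_def by simp
    moreover have "0 < \<beta> * a" using bpos apos by simp
    ultimately show ?thesis using k by (simp add: power_0_left)
  next
    case False
    define M where "M = Max S"
    have MS: "M \<in> S" unfolding M_def by (rule Max_in[OF fS False])
    then have Mn: "M < n" and cM: "c M \<le> a" unfolding S_def by auto
    have Seq: "S = {..M}"
    proof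
      show "S \<subseteq> {..M}" unfolding M_def using fS by auto
      show "{..M} \<subseteq> S"
      proof
        fix j assume "j \<in> {..M}"
        then have "j \<le> M" by simp
        then have "c j \<le> a" using cle[of j M] cM by linarith
        then show "j \<in> S" using \<open>j \<le> M\<close> Mn unfolding S_def by auto
      qed
    qed
    have UM: "U = M + 1" unfolding U_def S_def[symmetric] Seq by simp
    have "real (M + 1) ^ (k - 1) / \<beta> \<le> a" using cM unfolding cdef by simp
    then have le: "real U ^ (k - 1) \<le> \<beta> * a" using bpos UM by (simp add: divide_le_eq mult.commute)
    show ?thesis
    proof (cases "c M < a")
      case True
      then have "real (M + 1) ^ (k - 1) / \<beta> < a" unfolding cdef by simp
      then have "real U ^ (k - 1) < \<beta> * a" using bpos UM by (simp add: divide_less_eq mult.commute)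
      then show ?thesis using le by simp
    next
      case False
      then have cMa: "c M = a" using cM by simp
      have "T = {..<M}"
      proof
        show "T \<subseteq> {..<M}" unfolding T_def using cMa clt by auto
        show "{..<M} \<subseteq> T" unfolding T_def using cMa clt Mn by auto
      qed
      then have "L = M" unfolding L_def T_def[symmetric] by simp
      then show ?thesis using le UM by simp
    qed
  qed
  then show "real U ^ (k - 1) \<le> \<beta> * a" "real U ^ (k - 1) < \<beta> * a \<or> (U \<ge> 1 \<and> L = U - 1)"
    by auto
qed

lemma comb_sum:
  fixes y :: "nat \<Rightarrow> real"
  assumes k: "k \<ge> 2" and n: "n \<ge> 2" and y: "bidseq n y"
  defines "\<beta> \<equiv> (\<Sum>i=1..n. real i ^ (k - 1))"
  defines "c \<equiv> (\<lambda>j::nat. real (j + 1) ^ (k - 1) / \<beta>)"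
  shows "(\<Sum>j<n. (real (card ({..<n} \<inter> {i. c i \<le> y j})) ^ (k - 1)
              + real (card ({..<n} \<inter> {i. c i < y j})) ^ (k - 1)) / 2) \<le> \<beta> - 1"
proof -
  define Bn where "Bn = (\<Sum>i=1..n. i ^ (k - 1))"
  have bB: "\<beta> = real Bn" unfolding \<beta>_def Bn_def by simp
  have "\<beta> \<ge> 1"
  proof -
    have "(\<Sum>i\<in>{1}. real i ^ (k - 1)) \<le> \<beta>" unfolding \<beta>_def
      using n by (intro sum_mono2) auto
    then show ?thesis by simp
  qed
  then have bpos: "\<beta> > 0" by simp
  define U where "U j = card ({..<n} \<inter> {i. c i \<le> y j})" for j
  define L where "L j = card ({..<n} \<inter> {i. c i < y j})" for j
  define g where "g j = (real (U j) ^ (k - 1) + real (L j) ^ (k - 1)) / 2" for j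
  define u where "u j = U j ^ (k - 1)" for j
  have ypos: "y j > 0" if "j < n" for j using y that unfolding bidseq_def by auto
  have ysum: "(\<Sum>j<n. y j) \<le> 1" using y unfolding bidseq_def by auto
  have pt: "real (u j) \<le> \<beta> * y j \<and> g j \<le> real (u j) \<and> (real (u j) < \<beta> * y j \<or> g j \<le> real (u j) - 1/2)"
    if "j < n" for j
  proof -
    note cp = comb_point[OF k bpos ypos[OF that] c_def[THEN meta_eq_to_obj_eq], of n]
    have LU: "L j \<le> U j" using cp(1) unfolding L_def U_def .
    have 1: "real (u j) \<le> \<beta> * y j" using cp(2) unfolding u_def U_def by simp
    have "real (L j) ^ (k - 1) \<le> real (U j) ^ (k - 1)" using LU by (intro power_mono) auto
    then have 2: "g j \<le> real (u j)" unfolding g_def u_def by simp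
    have "real (u j) < \<beta> * y j \<or> g j \<le> real (u j) - 1/2"
    proof (cases "real (u j) < \<beta> * y j")
      case False
      then have "U j \<ge> 1 \<and> L j = U j - 1" using cp(3) unfolding u_def U_def L_def by simp
      moreover have "(U j - 1) ^ (k - 1) < U j ^ (k - 1)" if "U j \<ge> 1"
        using that k by (intro power_strict_mono) auto
      ultimately have "L j ^ (k - 1) + 1 \<le> U j ^ (k - 1)" by auto
      then have "real (L j ^ (k - 1)) + 1 \<le> real (U j ^ (k - 1))"
        by (metis of_nat_1 of_nat_add of_nat_le_iff)
      then have "real (L j) ^ (k - 1) \<le> real (U j) ^ (k - 1) - 1" by simp
      then show ?thesis unfolding g_def u_def by simp
    qed simp
    then show ?thesis using 1 2 by simp
  qed
  have sumu: "(\<Sum>j<n. real (u j)) \<le> \<beta> * (\<Sum>j<n. y j)"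
    unfolding sum_distrib_left using pt by (intro sum_mono) auto
  also have "\<dots> \<le> \<beta>" using ysum bpos by (simp add: mult_le_cancel_left1)
  finally have sumu1: "(\<Sum>j<n. real (u j)) \<le> \<beta>" .
  show ?thesis
  proof (cases "\<exists>j<n. real (u j) < \<beta> * y j")
    case True
    have "(\<Sum>j<n. real (u j)) < (\<Sum>j<n. \<beta> * y j)"
      using True pt by (intro sum_strict_mono_ex1) auto
    also have "\<dots> \<le> \<beta>" using ysum bpos by (simp add: sum_distrib_left[symmetric] mult_le_cancel_left1)
    finally have "real (\<Sum>j<n. u j) < real Bn" using bB by simp
    then have "(\<Sum>j<n. u j) \<le> Bn - 1" by linarith
    then have r1: "real (\<Sum>j<n. u j) \<le> real (Bn - 1)" by (simp only: of_nat_le_iff)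
    have "Bn \<ge> 1" using \<open>\<beta> \<ge> 1\<close> bB by simp
    then have "real (\<Sum>j<n. u j) \<le> real Bn - 1" using r1 by (simp add: of_nat_diff)
    then have "(\<Sum>j<n. real (u j)) \<le> \<beta> - 1" using bB by simp
    moreover have "(\<Sum>j<n. g j) \<le> (\<Sum>j<n. real (u j))" using pt by (intro sum_mono) auto
    ultimately show ?thesis unfolding g_def U_def L_def by simp
  next
    case False
    then have "\<forall>j<n. g j \<le> real (u j) - 1/2" using pt by auto
    then have "(\<Sum>j<n. g j) \<le> (\<Sum>j<n. real (u j) - 1/2)" by (intro sum_mono) auto
    also have "\<dots> = (\<Sum>j<n. real (u j)) - real n / 2" by (simp add: sum_subtractf)
    also have "\<dots> \<le> \<beta> - 1" using sumu1 n by simp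
    finally show ?thesis unfolding g_def U_def L_def by simp
  qed
qed



lemma factor:
  fixes p :: "(nat \<Rightarrow> nat) \<Rightarrow> real"
  assumes "finite I"
  shows "(\<Sum>ss\<in>PiE I (\<lambda>_. perms n). (\<Prod>i\<in>I. p (ss i)) * of_bool (\<forall>i\<in>I. R (ss i)))
       = (\<Sum>\<sigma>\<in>perms n. p \<sigma> * of_bool (R \<sigma>)) ^ card I"
proof -
  have "(\<Sum>ss\<in>PiE I (\<lambda>_. perms n). (\<Prod>i\<in>I. p (ss i)) * of_bool (\<forall>i\<in>I. R (ss i)))
      = (\<Sum>ss\<in>PiE I (\<lambda>_. perms n). \<Prod>i\<in>I. p (ss i) * of_bool (R (ss i)))"
    using assms by (simp add: prod.distrib prod_of_bool)
  also have "\<dots> = (\<Prod>i\<in>I. \<Sum>\<sigma>\<in>perms n. p \<sigma> * of_bool (R \<sigma>))"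
    by (rule prod_sum_PiE[symmetric]) (use assms perms_finite in auto)
  also have "\<dots> = (\<Sum>\<sigma>\<in>perms n. p \<sigma> * of_bool (R \<sigma>)) ^ card I" by simp
  finally show ?thesis .
qed

lemma marg_frac:
  fixes g :: "nat \<Rightarrow> real"
  assumes "ob < n"
  shows "(\<Sum>\<sigma>\<in>perms n. unif_perm n \<sigma> * g (inv \<sigma> ob)) = (\<Sum>j<n. g j) / real n"
proof -
  have n: "real n > 0" using assms by simp
  have "(\<Sum>\<sigma>\<in>perms n. unif_perm n \<sigma> * g (inv \<sigma> ob)) = (\<Sum>\<sigma>\<in>perms n. g (inv \<sigma> ob)) / fact n"
    unfolding unif_perm_def by (simp add: sum_divide_distrib)
  also have "\<dots> = (\<Sum>j<n. g j) / real n"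
    using marg[OF assms, of g] n by (simp add: field_simps)
  finally show ?thesis .
qed

lemma unif_permdist: "permdist n (unif_perm n)"
  unfolding permdist_def unif_perm_def by (simp add: perms_card)

lemma part1_tau:
  assumes k: "k \<ge> 2" and n: "n \<ge> 2" and tau: "\<tau> \<in> perms n" and y: "bidseq n y"
  defines "\<beta> \<equiv> (\<Sum>i=1..n. real i ^ (k - 1))"
  defines "c \<equiv> (\<lambda>j::nat. real (j + 1) ^ (k - 1) / \<beta>)"
  shows "(\<Sum>ss\<in>PiE {1..k-1} (\<lambda>_. perms n). (\<Prod>i\<in>{1..k-1}. unif_perm n (ss i)) *
           (\<Sum>ob<n. share (\<lambda>i. if i = 0 then bid y \<tau> ob else bid c (ss i) ob) k 0))
         \<le> (\<beta> - 1) / real n ^ (k - 1)"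
proof -
  let ?SS = "PiE {1..k-1} (\<lambda>_. perms n)"
  let ?W = "\<lambda>ss. (\<Prod>i\<in>{1..k-1}. unif_perm n (ss i))"
  let ?G = "\<lambda>v. (real (card ({..<n} \<inter> {i. c i \<le> v})) ^ (k - 1)
              + real (card ({..<n} \<inter> {i. c i < v})) ^ (k - 1)) / 2"
  have Wnn: "?W ss \<ge> 0" for ss unfolding unif_perm_def by (simp add: prod_nonneg)
  have npos: "real n > 0" using n by simp
  have "(\<Sum>ss\<in>?SS. ?W ss * (\<Sum>ob<n. share (\<lambda>i. if i = 0 then bid y \<tau> ob else bid c (ss i) ob) k 0))
      = (\<Sum>ob<n. \<Sum>ss\<in>?SS. ?W ss * share (\<lambda>i. if i = 0 then bid y \<tau> ob else bid c (ss i) ob) k 0)"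
    by (simp add: sum_distrib_left sum.swap[of _ "{..<n}"])
  also have "\<dots> \<le> (\<Sum>ob<n. ?G (bid y \<tau> ob) / real n ^ (k - 1))"
  proof (rule sum_mono)
    fix ob assume "ob \<in> {..<n}"
    then have ob: "ob < n" by simp
    define a where "a = bid y \<tau> ob"
    have mf: "(\<Sum>\<sigma>\<in>perms n. unif_perm n \<sigma> * of_bool (P (bid c \<sigma> ob)))
        = real (card ({..<n} \<inter> {i. P (c i)})) / real n" for P
      using marg_frac[OF ob, of "\<lambda>j. of_bool (P (c j))"] unfolding bid_def by simp
    have "(\<Sum>ss\<in>?SS. ?W ss * share (\<lambda>i. if i = 0 then a else bid c (ss i) ob) k 0)
       \<le> (\<Sum>ss\<in>?SS. ?W ss * ((of_bool (\<forall>i\<in>{1..k-1}. bid c (ss i) ob \<le> a)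
                                + of_bool (\<forall>i\<in>{1..k-1}. bid c (ss i) ob < a)) / 2))"
    proof (rule sum_mono)
      fix ss
      have "share (\<lambda>i. if i = 0 then a else bid c (ss i) ob) k 0
         \<le> (of_bool (\<forall>i\<in>{1..k-1}. bid c (ss i) ob \<le> a) + of_bool (\<forall>i\<in>{1..k-1}. bid c (ss i) ob < a)) / 2"
        using share_upper[of k "\<lambda>i. if i = 0 then a else bid c (ss i) ob"] k by simp
      then show "?W ss * share (\<lambda>i. if i = 0 then a else bid c (ss i) ob) k 0
         \<le> ?W ss * ((of_bool (\<forall>i\<in>{1..k-1}. bid c (ss i) ob \<le> a)
                                + of_bool (\<forall>i\<in>{1..k-1}. bid c (ss i) ob < a)) / 2)"
        using Wnn by (rule mult_left_mono)
    qed
    also have "\<dots> = ((\<Sum>ss\<in>?SS. ?W ss * of_bool (\<forall>i\<in>{1..k-1}. bid c (ss i) ob \<le> a))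
                    + (\<Sum>ss\<in>?SS. ?W ss * of_bool (\<forall>i\<in>{1..k-1}. bid c (ss i) ob < a))) / 2"
      by (simp only: times_divide_eq_right distrib_left add_divide_distrib sum_divide_distrib sum.distrib)
    also have "\<dots> = ((real (card ({..<n} \<inter> {i. c i \<le> a})) / real n) ^ (k - 1)
                   + (real (card ({..<n} \<inter> {i. c i < a})) / real n) ^ (k - 1)) / 2"
      using factor[where I="{1..k-1}" and p="unif_perm n" and n=n and R="\<lambda>\<sigma>. bid c \<sigma> ob \<le> a"]
            factor[where I="{1..k-1}" and p="unif_perm n" and n=n and R="\<lambda>\<sigma>. bid c \<sigma> ob < a"]
            mf[of "\<lambda>v. v \<le> a"] mf[of "\<lambda>v. v < a"] by simp
    also have "\<dots> = ?G a / real n ^ (k - 1)"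
      by (simp add: power_divide add_divide_distrib)
    finally show "(\<Sum>ss\<in>?SS. ?W ss * share (\<lambda>i. if i = 0 then bid y \<tau> ob else bid c (ss i) ob) k 0)
        \<le> ?G (bid y \<tau> ob) / real n ^ (k - 1)" unfolding a_def .
  qed
  also have "\<dots> = (\<Sum>ob<n. ?G (y (inv \<tau> ob))) / real n ^ (k - 1)"
    unfolding bid_def by (simp add: sum_divide_distrib)
  also have "\<dots> = (\<Sum>j<n. ?G (y j)) / real n ^ (k - 1)"
  proof -
    have "\<tau> permutes {..<n}" using tau unfolding perms_def by simp
    from sum_inv_perm[OF this, of "\<lambda>j. ?G (y j)"] show ?thesis by simp
  qed
  also have "\<dots> \<le> (\<beta> - 1) / real n ^ (k - 1)"
    using comb_sum[OF k n y] npos unfolding \<beta>_def c_def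
    by (intro divide_right_mono) auto
  finally show ?thesis .
qed

lemma part1:
  assumes k: "k \<ge> 2" and n: "n \<ge> 2" and y: "bidseq n y" and q: "permdist n q"
  defines "\<beta> \<equiv> (\<Sum>i=1..n. real i ^ (k - 1))"
  defines "c \<equiv> (\<lambda>j::nat. real (j + 1) ^ (k - 1) / \<beta>)"
  shows "Aw n k c (unif_perm n) y q \<le> (\<beta> - 1) / real n ^ (k - 1)"
proof -
  let ?R = "(\<beta> - 1) / real n ^ (k - 1)"
  have "Aw n k c (unif_perm n) y q = (\<Sum>\<tau>\<in>perms n. q \<tau> *
      (\<Sum>ss\<in>PiE {1..k-1} (\<lambda>_. perms n). (\<Prod>i\<in>{1..k-1}. unif_perm n (ss i)) *
           (\<Sum>ob<n. share (\<lambda>i. if i = 0 then bid y \<tau> ob else bid c (ss i) ob) k 0)))"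
    unfolding Aw_def by (simp add: sum_distrib_left mult.assoc)
  also have "\<dots> \<le> (\<Sum>\<tau>\<in>perms n. q \<tau> * ?R)"
    apply (rule sum_mono)
    apply (rule mult_left_mono)
    using part1_tau[OF k n _ y] q unfolding permdist_def \<beta>_def c_def by auto
  also have "\<dots> = ?R" using q unfolding permdist_def by (simp add: sum_distrib_right[symmetric] sum_divide_distrib[symmetric])
  finally show ?thesis .
qed



lemma convex_pow_nonneg: "convex_on {0::real..} (\<lambda>t. t ^ m)"
proof (cases "even m")
  case True
  show ?thesis by (rule convex_on_subset[OF convex_power_even[OF True]]) auto
next
  case False
  then show ?thesis by (rule convex_power_odd)
qed

lemma power_mean:
  fixes z :: "'a \<Rightarrow> real"
  assumes "finite S" "S \<noteq> {}" "\<And>i. i \<in> S \<Longrightarrow> z i \<ge> 0" "m \<ge> 1"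
  shows "(\<Sum>i\<in>S. z i) ^ m \<le> real (card S) ^ (m - 1) * (\<Sum>i\<in>S. z i ^ m)"
proof -
  define N where "N = real (card S)"
  have N: "N > 0" unfolding N_def using assms(1,2) by (simp add: card_gt_0_iff)
  have "(\<lambda>t. t ^ m) (\<Sum>i\<in>S. (1 / N) *\<^sub>R z i) \<le> (\<Sum>i\<in>S. (1 / N) * (\<lambda>t. t ^ m) (z i))"
    using N assms by (intro convex_on_sum[OF assms(1,2) convex_pow_nonneg]) (auto simp: N_def)
  then have "((\<Sum>i\<in>S. z i) / N) ^ m \<le> (\<Sum>i\<in>S. z i ^ m) / N"
    by (simp add: sum_divide_distrib[symmetric] sum_distrib_left[symmetric] divide_inverse mult.commute)
  then have "(\<Sum>i\<in>S. z i) ^ m / N ^ m \<le> (\<Sum>i\<in>S. z i ^ m) / N"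
    by (simp add: power_divide)
  then have "(\<Sum>i\<in>S. z i) ^ m \<le> (\<Sum>i\<in>S. z i ^ m) / N * N ^ m"
    using N by (simp add: divide_le_eq)
  also have "N ^ m = N * N ^ (m - 1)" using assms(4) by (metis power_eq_if not_one_le_zero)
  finally show ?thesis using N unfolding N_def by (simp add: mult_ac)
qed

lemma rank_sum:
  fixes x :: "nat \<Rightarrow> real" and f :: "nat \<Rightarrow> real"
  assumes "mono f" "finite J"
  shows "(\<Sum>t=1..card J. f t) \<le> (\<Sum>j\<in>J. f (card {i\<in>J. x i \<le> x j}))"
  using assms(2)
proof (induction "card J" arbitrary: J)
  case 0
  then show ?case by simp
next
  case (Suc N)
  then have Jne: "J \<noteq> {}" by auto
  have "Max (x ` J) \<in> x ` J" using Suc.prems Jne by (intro Max_in) auto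
  then obtain m where mJ: "m \<in> J" and xm: "x m = Max (x ` J)" by auto
  have mmax: "x j \<le> x m" if "j \<in> J" for j using that Suc.prems xm by (simp add: Max_ge)
  define J' where "J' = J - {m}"
  have fJ': "finite J'" unfolding J'_def using Suc.prems by simp
  have cJ': "card J' = N" unfolding J'_def using Suc.hyps(2) mJ Suc.prems by simp
  have IH: "(\<Sum>t=1..N. f t) \<le> (\<Sum>j\<in>J'. f (card {i\<in>J'. x i \<le> x j}))"
    using Suc.hyps(1)[of J'] cJ' fJ' by simp
  have "(\<Sum>j\<in>J'. f (card {i\<in>J'. x i \<le> x j})) \<le> (\<Sum>j\<in>J'. f (card {i\<in>J. x i \<le> x j}))"
  proof (rule sum_mono)
    fix j assume "j \<in> J'"
    have "card {i\<in>J'. x i \<le> x j} \<le> card {i\<in>J. x i \<le> x j}"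
      using Suc.prems unfolding J'_def by (intro card_mono) auto
    then show "f (card {i\<in>J'. x i \<le> x j}) \<le> f (card {i\<in>J. x i \<le> x j})"
      by (rule monoD[OF assms(1)])
  qed
  moreover have "{i\<in>J. x i \<le> x m} = J" using mmax by auto
  moreover have "(\<Sum>j\<in>J. f (card {i\<in>J. x i \<le> x j})) = f (card {i\<in>J. x i \<le> x m}) + (\<Sum>j\<in>J'. f (card {i\<in>J. x i \<le> x j}))"
    unfolding J'_def using Suc.prems mJ by (simp add: sum.remove)
  moreover have "(\<Sum>t=1..Suc N. f t) = (\<Sum>t=1..N. f t) + f (Suc N)" by simp
  ultimately show ?case using IH Suc.hyps(2) by simp
qed



lemma part2:
  assumes k: "k \<ge> 2" and n: "n \<ge> 2" and x: "bidseq n x" and p: "permdist n p"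
  defines "\<beta> \<equiv> (\<Sum>i=1..n. real i ^ (k - 1))"
  shows "\<exists>y. bidseq n y \<and> (\<beta> - 1) / real n ^ (k - 1) \<le> Aw n k x p y (unif_perm n)"
proof -
  let ?I = "{1..k-1}"
  let ?SS = "PiE {1..k-1} (\<lambda>_. perms n)"
  have npos: "real n > 0" using n by simp
  have xpos: "\<And>j. j < n \<Longrightarrow> x j > 0" using x unfolding bidseq_def by auto
  have pnn: "\<And>\<sigma>. \<sigma> \<in> perms n \<Longrightarrow> p \<sigma> \<ge> 0" using p unfolding permdist_def by auto
  have psum: "(\<Sum>\<sigma>\<in>perms n. p \<sigma>) = 1" using p unfolding permdist_def by auto
  have ne: "x ` {..<n} \<noteq> {}" using n by (auto simp: lessThan_empty_iff)
  have "Min (x ` {..<n}) \<in> x ` {..<n}" using ne by (intro Min_in) auto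
  then obtain j0 where j0: "j0 < n" and xj0: "x j0 = Min (x ` {..<n})" by auto
  have minx: "x j0 \<le> x i" if "i < n" for i using that xj0 by simp
  define \<epsilon> where "\<epsilon> = x j0 / (2 * real n)"
  have epos: "\<epsilon> > 0" unfolding \<epsilon>_def using xpos[OF j0] npos by simp
  have ne2: "real n * \<epsilon> = x j0 / 2" unfolding \<epsilon>_def using npos by (simp add: field_simps)
  define y where "y j = x j + \<epsilon> - (if j = j0 then real n * \<epsilon> else 0)" for j
  have yJ: "y j = x j + \<epsilon>" if "j \<noteq> j0" for j using that unfolding y_def by simp
  have ybid: "bidseq n y"
  proof -
    have "y j > 0" if "j < n" for j
    proof (cases "j = j0")
      case True
      then show ?thesis unfolding y_def using ne2 xpos[OF j0] epos by simp
    next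
      case False
      then show ?thesis using yJ xpos[OF that] epos by simp
    qed
    moreover have "(\<Sum>j<n. y j) = (\<Sum>j<n. x j)"
      unfolding y_def using j0 ne2 by (simp add: sum.distrib sum_subtractf)
    ultimately show ?thesis using x unfolding bidseq_def by simp
  qed
  define W where "W ss = (\<Prod>i\<in>?I. p (ss i))" for ss
  have Wnn: "W ss \<ge> 0" if "ss \<in> ?SS" for ss
    unfolding W_def using that pnn by (intro prod_nonneg) (auto simp: PiE_iff)
  define B where "B \<tau> ss ob = (of_bool (\<forall>i\<in>?I. bid x (ss i) ob < bid y \<tau> ob) :: real)" for \<tau> ss ob
  define G where "G ob v = (\<Sum>\<sigma>\<in>perms n. p \<sigma> * of_bool (bid x \<sigma> ob < v))" for ob v
  define H where "H ob j = (\<Sum>\<sigma>\<in>perms n. p \<sigma> * of_bool (bid x \<sigma> ob \<le> x j))" for ob j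
  define J where "J = {..<n} - {j0}"
  define N where "N j = card ({..<n} \<inter> {i. x i \<le> x j})" for j
  have Gnn: "G ob v \<ge> 0" for ob v unfolding G_def using pnn by (intro sum_nonneg) auto
  have Hnn: "H ob j \<ge> 0" for ob j unfolding H_def using pnn by (intro sum_nonneg) auto
  have unn: "unif_perm n \<tau> \<ge> 0" for \<tau> unfolding unif_perm_def by simp
  have S1: "(\<Sum>\<tau>\<in>perms n. \<Sum>ss\<in>?SS. unif_perm n \<tau> * W ss * (\<Sum>ob<n. B \<tau> ss ob)) \<le> Aw n k x p y (unif_perm n)"
    unfolding Aw_def W_def[symmetric]
  proof (intro sum_mono)
    fix \<tau> ss assume ss: "ss \<in> ?SS"
    have "(\<Sum>ob<n. B \<tau> ss ob) \<le> (\<Sum>ob<n. share (\<lambda>i. if i = 0 then bid y \<tau> ob else bid x (ss i) ob) k 0)"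
    proof (intro sum_mono)
      fix ob
      show "B \<tau> ss ob \<le> share (\<lambda>i. if i = 0 then bid y \<tau> ob else bid x (ss i) ob) k 0"
        using share_lower[of k "\<lambda>i. if i = 0 then bid y \<tau> ob else bid x (ss i) ob"] k
        unfolding B_def by simp
    qed
    then show "unif_perm n \<tau> * W ss * (\<Sum>ob<n. B \<tau> ss ob)
        \<le> unif_perm n \<tau> * W ss * (\<Sum>ob<n. share (\<lambda>i. if i = 0 then bid y \<tau> ob else bid x (ss i) ob) k 0)"
      using unn Wnn[OF ss] by (intro mult_left_mono) auto
  qed
  have S2: "(\<Sum>\<tau>\<in>perms n. \<Sum>ss\<in>?SS. unif_perm n \<tau> * W ss * (\<Sum>ob<n. B \<tau> ss ob))
      = (\<Sum>ob<n. \<Sum>\<tau>\<in>perms n. unif_perm n \<tau> * (\<Sum>ss\<in>?SS. W ss * B \<tau> ss ob))"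
  proof -
    have "(\<Sum>\<tau>\<in>perms n. \<Sum>ss\<in>?SS. unif_perm n \<tau> * W ss * (\<Sum>ob<n. B \<tau> ss ob))
        = (\<Sum>\<tau>\<in>perms n. \<Sum>ss\<in>?SS. \<Sum>ob<n. unif_perm n \<tau> * (W ss * B \<tau> ss ob))"
      by (simp add: sum_distrib_left mult.assoc)
    also have "\<dots> = (\<Sum>\<tau>\<in>perms n. \<Sum>ob<n. \<Sum>ss\<in>?SS. unif_perm n \<tau> * (W ss * B \<tau> ss ob))"
      by (rule sum.cong[OF refl], rule sum.swap)
    also have "\<dots> = (\<Sum>ob<n. \<Sum>\<tau>\<in>perms n. \<Sum>ss\<in>?SS. unif_perm n \<tau> * (W ss * B \<tau> ss ob))"
      by (rule sum.swap)
    also have "\<dots> = (\<Sum>ob<n. \<Sum>\<tau>\<in>perms n. unif_perm n \<tau> * (\<Sum>ss\<in>?SS. W ss * B \<tau> ss ob))"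
      by (simp add: sum_distrib_left)
    finally show ?thesis .
  qed
  have S34: "(\<Sum>\<tau>\<in>perms n. unif_perm n \<tau> * (\<Sum>ss\<in>?SS. W ss * B \<tau> ss ob))
      = (\<Sum>j<n. G ob (y j) ^ (k - 1)) / real n" if ob: "ob < n" for ob
  proof -
    have "(\<Sum>ss\<in>?SS. W ss * B \<tau> ss ob) = G ob (bid y \<tau> ob) ^ (k - 1)" for \<tau>
      using factor[where I="?I" and p=p and n=n and R="\<lambda>\<sigma>. bid x \<sigma> ob < bid y \<tau> ob"]
      unfolding W_def B_def G_def by simp
    then have "(\<Sum>\<tau>\<in>perms n. unif_perm n \<tau> * (\<Sum>ss\<in>?SS. W ss * B \<tau> ss ob))
        = (\<Sum>\<tau>\<in>perms n. unif_perm n \<tau> * (\<lambda>j. G ob (y j) ^ (k - 1)) (inv \<tau> ob))"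
      unfolding bid_def by simp
    also have "\<dots> = (\<Sum>j<n. G ob (y j) ^ (k - 1)) / real n"
      by (rule marg_frac[OF ob])
    finally show ?thesis .
  qed
  have S5: "(\<Sum>j\<in>J. H ob j ^ (k - 1)) \<le> (\<Sum>j<n. G ob (y j) ^ (k - 1))" for ob
  proof -
    have "(\<Sum>j\<in>J. H ob j ^ (k - 1)) \<le> (\<Sum>j\<in>J. G ob (y j) ^ (k - 1))"
    proof (rule sum_mono)
      fix j assume jJ: "j \<in> J"
      have "H ob j \<le> G ob (y j)"
        unfolding H_def G_def
      proof (rule sum_mono)
        fix \<sigma> assume "\<sigma> \<in> perms n"
        have "of_bool (bid x \<sigma> ob \<le> x j) \<le> (of_bool (bid x \<sigma> ob < y j) :: real)"
          using yJ[of j] jJ epos unfolding J_def by auto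
        then show "p \<sigma> * of_bool (bid x \<sigma> ob \<le> x j) \<le> p \<sigma> * of_bool (bid x \<sigma> ob < y j)"
          using pnn[OF \<open>\<sigma> \<in> perms n\<close>] by (rule mult_left_mono)
      qed
      then show "H ob j ^ (k - 1) \<le> G ob (y j) ^ (k - 1)"
        using Hnn by (intro power_mono) auto
    qed
    also have "\<dots> \<le> (\<Sum>j<n. G ob (y j) ^ (k - 1))"
      unfolding J_def using Gnn by (intro sum_mono2) auto
    finally show ?thesis .
  qed
  have S7: "(\<Sum>ob<n. H ob j) = real (N j)" for j
  proof -
    have "(\<Sum>ob<n. H ob j) = (\<Sum>\<sigma>\<in>perms n. p \<sigma> * (\<Sum>ob<n. of_bool (x (inv \<sigma> ob) \<le> x j)))"
      unfolding H_def bid_def sum_distrib_left by (rule sum.swap)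
    also have "\<dots> = (\<Sum>\<sigma>\<in>perms n. p \<sigma> * real (N j))"
    proof (rule sum.cong[OF refl])
      fix \<sigma> assume "\<sigma> \<in> perms n"
      then have "\<sigma> permutes {..<n}" unfolding perms_def by simp
      from sum_inv_perm[OF this, of "\<lambda>i. (of_bool (x i \<le> x j) :: real)"]
      show "p \<sigma> * (\<Sum>ob<n. of_bool (x (inv \<sigma> ob) \<le> x j)) = p \<sigma> * real (N j)"
        unfolding N_def by simp
    qed
    also have "\<dots> = real (N j)" using psum by (simp add: sum_distrib_right[symmetric])
    finally show ?thesis .
  qed
  have S6: "(\<Sum>ob<n. H ob j ^ (k - 1)) \<ge> real (N j) ^ (k - 1) / real n ^ (k - 2)" for j
  proof -
    have "(\<Sum>ob<n. H ob j) ^ (k - 1) \<le> real (card {..<n}) ^ (k - 1 - 1) * (\<Sum>ob<n. H ob j ^ (k - 1))"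
      using n k Hnn by (intro power_mean) (auto simp: lessThan_empty_iff)
    then have "real (N j) ^ (k - 1) \<le> real n ^ (k - 2) * (\<Sum>ob<n. H ob j ^ (k - 1))"
      using S7 by (simp add: diff_diff_add numeral_2_eq_2)
    then show ?thesis using npos by (simp add: divide_le_eq mult.commute)
  qed
  have S8: "\<beta> - 1 \<le> (\<Sum>j\<in>J. real (N j) ^ (k - 1))"
  proof -
    define f where "f t = real (t + 1) ^ (k - 1)" for t
    have fm: "mono f" unfolding f_def by (intro monoI power_mono) auto
    have fJ: "finite J" unfolding J_def by simp
    have cJ: "card J = n - 1" unfolding J_def using j0 by simp
    have Nj: "N j = card {i\<in>J. x i \<le> x j} + 1" if "j \<in> J" for j
    proof -
      have "{..<n} \<inter> {i. x i \<le> x j} = insert j0 {i\<in>J. x i \<le> x j}"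
        using that minx j0 unfolding J_def by auto
      moreover have "j0 \<notin> {i\<in>J. x i \<le> x j}" unfolding J_def by simp
      ultimately show ?thesis unfolding N_def using fJ by simp
    qed
    have "(\<Sum>t=1..n-1. f t) \<le> (\<Sum>j\<in>J. f (card {i\<in>J. x i \<le> x j}))"
      using rank_sum[OF fm fJ, of x] cJ by simp
    also have "\<dots> = (\<Sum>j\<in>J. real (N j) ^ (k - 1))"
      unfolding f_def using Nj by (intro sum.cong) auto
    finally have r: "(\<Sum>t=1..n-1. f t) \<le> (\<Sum>j\<in>J. real (N j) ^ (k - 1))" .
    have "\<beta> = 1 + (\<Sum>i=Suc 1..n. real i ^ (k - 1))"
      unfolding \<beta>_def using n by (simp add: sum.atLeast_Suc_atMost)
    also have "(\<Sum>i=Suc 1..n. real i ^ (k - 1)) = (\<Sum>i=Suc 1..Suc (n-1). real i ^ (k - 1))"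
      using n by simp
    also have "\<dots> = (\<Sum>t=1..n-1. f t)" unfolding f_def
      by (subst sum.shift_bounds_cl_Suc_ivl) simp
    finally show ?thesis using r by simp
  qed
  have "(\<beta> - 1) / real n ^ (k - 1) \<le> (\<Sum>j\<in>J. real (N j) ^ (k - 1)) / real n ^ (k - 1)"
    using S8 npos by (intro divide_right_mono) auto
  also have "\<dots> = (\<Sum>j\<in>J. real (N j) ^ (k - 1) / real n ^ (k - 2)) / real n"
  proof -
    obtain k' where k': "k = Suc (Suc k')" using k by (metis add_2_eq_Suc le_Suc_ex)
    have "real n ^ (k - 1) = real n ^ (k - 2) * real n" unfolding k' by simp
    then show ?thesis by (simp add: sum_divide_distrib)
  qed
  also have "\<dots> \<le> (\<Sum>j\<in>J. \<Sum>ob<n. H ob j ^ (k - 1)) / real n"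
    using S6 npos by (intro divide_right_mono sum_mono) auto
  also have "\<dots> = (\<Sum>ob<n. \<Sum>j\<in>J. H ob j ^ (k - 1)) / real n"
    using sum.swap[where A=J and B="{..<n}" and g="\<lambda>j ob. H ob j ^ (k - 1)"] by simp
  also have "\<dots> \<le> (\<Sum>ob<n. (\<Sum>j<n. G ob (y j) ^ (k - 1)) / real n)"
  proof -
    have "(\<Sum>ob<n. \<Sum>j\<in>J. H ob j ^ (k - 1)) / real n = (\<Sum>ob<n. (\<Sum>j\<in>J. H ob j ^ (k - 1)) / real n)"
      by (rule sum_divide_distrib)
    also have "\<dots> \<le> (\<Sum>ob<n. (\<Sum>j<n. G ob (y j) ^ (k - 1)) / real n)"
      using S5 npos by (intro sum_mono divide_right_mono) auto
    finally show ?thesis .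
  qed
  also have "\<dots> = (\<Sum>ob<n. \<Sum>\<tau>\<in>perms n. unif_perm n \<tau> * (\<Sum>ss\<in>?SS. W ss * B \<tau> ss ob))"
    using S34 by simp
  also have "\<dots> \<le> Aw n k x p y (unif_perm n)" using S1 S2 by simp
  finally show ?thesis using ybid by blast
qed


theorem theorem4p5:
  fixes k n :: nat
  assumes "k \<ge> 2" and "n \<ge> k"
  defines "\<beta> \<equiv> (\<Sum>i=1..n. real i ^ (k - 1))"
  defines "c \<equiv> (\<lambda>j::nat. real (j + 1) ^ (k - 1) / \<beta>)"
  defines "B \<equiv> (1 / real (k - 1)) * (real n - (\<beta> - 1) / real n ^ (k - 1))"
  shows "(\<forall>y q. bidseq n y \<and> permdist n q \<longrightarrow>
            (\<forall>d\<in>{1..k-1}. expected_win n k c (unif_perm n) y q d \<ge> B))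
       \<and> (\<forall>x p. bidseq n x \<and> permdist n p \<longrightarrow>
            (\<exists>y q. bidseq n y \<and> permdist n q \<and>
               (\<forall>d\<in>{1..k-1}. expected_win n k x p y q d \<le> B)))"
proof -
  have k: "k \<ge> 2" and n: "n \<ge> 2" using assms(1,2) by auto
  have k1: "real (k - 1) > 0" using k by simp
  have Bf: "B = (real n - (\<beta> - 1) / real n ^ (k - 1)) / real (k - 1)" unfolding B_def by simp
  have P1: "expected_win n k c (unif_perm n) y q d \<ge> B"
    if y: "bidseq n y" and q: "permdist n q" and d: "d \<in> {1..k-1}" for y q d
  proof -
    have A: "Aw n k c (unif_perm n) y q \<le> (\<beta> - 1) / real n ^ (k - 1)"
      using part1[OF k n y q] unfolding \<beta>_def c_def by simp
    have "expected_win n k c (unif_perm n) y q d = (real n - Aw n k c (unif_perm n) y q) / real (k - 1)"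
      by (rule ew_eq[OF k unif_permdist q d])
    then show ?thesis unfolding Bf using A k1 by (simp add: divide_right_mono)
  qed
  have P2: "\<exists>y q. bidseq n y \<and> permdist n q \<and> (\<forall>d\<in>{1..k-1}. expected_win n k x p y q d \<le> B)"
    if x: "bidseq n x" and p: "permdist n p" for x p
  proof -
    obtain y where y: "bidseq n y" and A: "(\<beta> - 1) / real n ^ (k - 1) \<le> Aw n k x p y (unif_perm n)"
      using part2[OF k n x p] unfolding \<beta>_def by blast
    have "expected_win n k x p y (unif_perm n) d \<le> B" if d: "d \<in> {1..k-1}" for d
    proof -
      have "expected_win n k x p y (unif_perm n) d = (real n - Aw n k x p y (unif_perm n)) / real (k - 1)"
        by (rule ew_eq[OF k p unif_permdist d])
      then show ?thesis unfolding Bf using A k1 by (simp add: divide_right_mono)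
    qed
    then show ?thesis using y unif_permdist by blast
  qed
  show ?thesis using P1 P2 by blast
qed

end
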